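(* Let $\phi=(\phi_g,X_g,X)_{g\in G}$ be a partial action of a group $G$ on a set $X$ and let $\psi:G\to H$ be a group homomorphism. For $h\in H$ put $X_h:=\bigcup_{g\in G,\ \psi(g)=h}X_g$ and $\overline{\phi}_h:X_{h^{-1}}\to X_h$, $\overline{\phi}_h(x):=\phi_g(x)$ whenever $\psi(g)=h$ and $x\in X_{g^{-1}}$. Then these data give a well-defined partial action $\overline{\phi}=(\overline{\phi}_h,X_h,X)_{h\in H}$ of $H$ on $X$ if and only if for every $g\in\ker\psi$ one has $X_g=X_{g^{-1}}$ and $\phi_g=\operatorname{id}$ (on $X_{g^{-1}}$).
   Context: A partial action of a group $G$ (identity $\varepsilon$) on a set $X$ is $\phi=(\phi_g,X_g,X)_{g\in G}$ with $X_g\subseteq X$ and bijections $\phi_g:X_{g^{-1}}\to X_g$ such that (i) $X_\varepsilon=X$ and $\phi_\varepsilon=\operatorname{id}_X$; (ii) $\phi_g(X_{g^{-1}}\cap X_h)=X_g\cap X_{gh}$ for all $g,h$; (iii) $\phi_g(\phi_h(x))=\phi_{gh}(x)$ for all $g,h$ and $x\in X_{h^{-1}}\cap X_{h^{-1}g^{-1}}$. *)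

theory Defs
  imports "HOL-Algebra.Group"
begin

definition partial_action ::
  "('g, 'm) monoid_scheme \<Rightarrow> 'x set \<Rightarrow> ('g \<Rightarrow> 'x set) \<Rightarrow> ('g \<Rightarrow> 'x \<Rightarrow> 'x) \<Rightarrow> bool" where
  "partial_action G X D f \<longleftrightarrow>
     (\<forall>g\<in>carrier G. D g \<subseteq> X \<and> bij_betw (f g) (D (inv\<^bsub>G\<^esub> g)) (D g)) \<and>
     D \<one>\<^bsub>G\<^esub> = X \<and> (\<forall>x\<in>X. f \<one>\<^bsub>G\<^esub> x = x) \<and>
     (\<forall>g\<in>carrier G. \<forall>h\<in>carrier G.
        f g ` (D (inv\<^bsub>G\<^esub> g) \<inter> D h) = D g \<inter> D (g \<otimes>\<^bsub>G\<^esub> h)) \<and>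
     (\<forall>g\<in>carrier G. \<forall>h\<in>carrier G.
        \<forall>x \<in> D (inv\<^bsub>G\<^esub> h) \<inter> D (inv\<^bsub>G\<^esub> h \<otimes>\<^bsub>G\<^esub> inv\<^bsub>G\<^esub> g).
          f g (f h x) = f (g \<otimes>\<^bsub>G\<^esub> h) x)"

definition induced_dom ::
  "('g, 'm) monoid_scheme \<Rightarrow> ('g \<Rightarrow> 'h) \<Rightarrow> ('g \<Rightarrow> 'x set) \<Rightarrow> 'h \<Rightarrow> 'x set" where
  "induced_dom G \<psi> D h = (\<Union>g\<in>{g\<in>carrier G. \<psi> g = h}. D g)"

definition induced_well_defined ::
  "('g, 'm) monoid_scheme \<Rightarrow> ('g \<Rightarrow> 'h) \<Rightarrow> ('g \<Rightarrow> 'x set) \<Rightarrow> ('g \<Rightarrow> 'x \<Rightarrow> 'x) \<Rightarrow> bool" where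
  "induced_well_defined G \<psi> D f \<longleftrightarrow>
     (\<forall>g1\<in>carrier G. \<forall>g2\<in>carrier G. \<psi> g1 = \<psi> g2 \<longrightarrow>
        (\<forall>x \<in> D (inv\<^bsub>G\<^esub> g1) \<inter> D (inv\<^bsub>G\<^esub> g2). f g1 x = f g2 x))"

definition induced_map ::
  "('g, 'm) monoid_scheme \<Rightarrow> ('g \<Rightarrow> 'h) \<Rightarrow> ('g \<Rightarrow> 'x set) \<Rightarrow> ('g \<Rightarrow> 'x \<Rightarrow> 'x) \<Rightarrow> 'h \<Rightarrow> 'x \<Rightarrow> 'x" where
  "induced_map G \<psi> D f h x =
     f (SOME g. g \<in> carrier G \<and> \<psi> g = h \<and> x \<in> D (inv\<^bsub>G\<^esub> g)) x"

end

theory Submission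
  imports Defs
begin

lemma pa_basic:
  assumes G: "group G" and pa: "partial_action G X D f"
  shows "\<And>g. g \<in> carrier G \<Longrightarrow> D g \<subseteq> X"
    and "\<And>g x. g \<in> carrier G \<Longrightarrow> x \<in> D (inv\<^bsub>G\<^esub> g) \<Longrightarrow> f g x \<in> D g"
    and "D \<one>\<^bsub>G\<^esub> = X"
    and "\<And>x. x \<in> X \<Longrightarrow> f \<one>\<^bsub>G\<^esub> x = x"
    and "\<And>g h. g \<in> carrier G \<Longrightarrow> h \<in> carrier G \<Longrightarrow>
        f g ` (D (inv\<^bsub>G\<^esub> g) \<inter> D h) = D g \<inter> D (g \<otimes>\<^bsub>G\<^esub> h)"
    and "\<And>g h x. g \<in> carrier G \<Longrightarrow> h \<in> carrier G \<Longrightarrow>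
        x \<in> D (inv\<^bsub>G\<^esub> h) \<Longrightarrow> x \<in> D (inv\<^bsub>G\<^esub> h \<otimes>\<^bsub>G\<^esub> inv\<^bsub>G\<^esub> g) \<Longrightarrow>
          f g (f h x) = f (g \<otimes>\<^bsub>G\<^esub> h) x"
    and "\<And>g y. g \<in> carrier G \<Longrightarrow> y \<in> D g \<Longrightarrow> f g (f (inv\<^bsub>G\<^esub> g) y) = y"
proof -
  note pd = pa[unfolded partial_action_def]
  have pA: "\<forall>g\<in>carrier G. D g \<subseteq> X \<and> bij_betw (f g) (D (inv\<^bsub>G\<^esub> g)) (D g)" using pd by (elim conjE) assumption
  have pB: "D \<one>\<^bsub>G\<^esub> = X" using pd by (elim conjE) assumption
  have pC: "\<forall>x\<in>X. f \<one>\<^bsub>G\<^esub> x = x" using pd by (elim conjE) assumption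
  have pD: "\<forall>g\<in>carrier G. \<forall>h\<in>carrier G.
        f g ` (D (inv\<^bsub>G\<^esub> g) \<inter> D h) = D g \<inter> D (g \<otimes>\<^bsub>G\<^esub> h)" using pd by (elim conjE) assumption
  have pE: "\<forall>g\<in>carrier G. \<forall>h\<in>carrier G.
        \<forall>x \<in> D (inv\<^bsub>G\<^esub> h) \<inter> D (inv\<^bsub>G\<^esub> h \<otimes>\<^bsub>G\<^esub> inv\<^bsub>G\<^esub> g).
          f g (f h x) = f (g \<otimes>\<^bsub>G\<^esub> h) x"
    using pd by (elim conjE) assumption
  show 1: "\<And>g. g \<in> carrier G \<Longrightarrow> D g \<subseteq> X" using pA by blast
  show "\<And>g x. g \<in> carrier G \<Longrightarrow> x \<in> D (inv\<^bsub>G\<^esub> g) \<Longrightarrow> f g x \<in> D g"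
    using pA unfolding bij_betw_def by blast
  show 3: "D \<one>\<^bsub>G\<^esub> = X" using pB by blast
  show 4: "\<And>x. x \<in> X \<Longrightarrow> f \<one>\<^bsub>G\<^esub> x = x" using pC by blast
  show "\<And>g h. g \<in> carrier G \<Longrightarrow> h \<in> carrier G \<Longrightarrow>
        f g ` (D (inv\<^bsub>G\<^esub> g) \<inter> D h) = D g \<inter> D (g \<otimes>\<^bsub>G\<^esub> h)" using pD by blast
  show 6: "\<And>g h x. g \<in> carrier G \<Longrightarrow> h \<in> carrier G \<Longrightarrow>
        x \<in> D (inv\<^bsub>G\<^esub> h) \<Longrightarrow> x \<in> D (inv\<^bsub>G\<^esub> h \<otimes>\<^bsub>G\<^esub> inv\<^bsub>G\<^esub> g) \<Longrightarrow>
          f g (f h x) = f (g \<otimes>\<^bsub>G\<^esub> h) x" using pE by blast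
  show "\<And>g y. g \<in> carrier G \<Longrightarrow> y \<in> D g \<Longrightarrow> f g (f (inv\<^bsub>G\<^esub> g) y) = y"
  proof -
    fix g y assume g: "g \<in> carrier G" and y: "y \<in> D g"
    have ig: "inv\<^bsub>G\<^esub> g \<in> carrier G" using G g by simp
    have "f g (f (inv\<^bsub>G\<^esub> g) y) = f (g \<otimes>\<^bsub>G\<^esub> inv\<^bsub>G\<^esub> g) y"
      apply (rule 6[OF g ig])
      using G g y 3 1[OF g] by (auto simp: group.inv_inv group.r_inv)
    also have "\<dots> = y" using G g y 1[OF g] 4 by (auto simp: group.r_inv)
    finally show "f g (f (inv\<^bsub>G\<^esub> g) y) = y" .
  qed
qed


lemma dom_iff: "y \<in> induced_dom G \<psi> D h \<longleftrightarrow> (\<exists>g\<in>carrier G. \<psi> g = h \<and> y \<in> D g)"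
  by (auto simp: induced_dom_def)

lemma wdD:
  assumes "induced_well_defined G \<psi> D f" "g1 \<in> carrier G" "g2 \<in> carrier G" "\<psi> g1 = \<psi> g2"
    "x \<in> D (inv\<^bsub>G\<^esub> g1)" "x \<in> D (inv\<^bsub>G\<^esub> g2)"
  shows "f g1 x = f g2 x"
  using assms unfolding induced_well_defined_def by blast

lemma map_eq:
  assumes wd: "induced_well_defined G \<psi> D f" and g: "g \<in> carrier G" and x: "x \<in> D (inv\<^bsub>G\<^esub> g)"
  shows "induced_map G \<psi> D f (\<psi> g) x = f g x"
proof -
  have ex: "\<exists>g'. g' \<in> carrier G \<and> \<psi> g' = \<psi> g \<and> x \<in> D (inv\<^bsub>G\<^esub> g')" using g x by blast
  define g' where "g' = (SOME g'. g' \<in> carrier G \<and> \<psi> g' = \<psi> g \<and> x \<in> D (inv\<^bsub>G\<^esub> g'))"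
  have g': "g' \<in> carrier G \<and> \<psi> g' = \<psi> g \<and> x \<in> D (inv\<^bsub>G\<^esub> g')"
    unfolding g'_def by (rule someI_ex[OF ex])
  have "f g' x = f g x" using wdD[OF wd _ g _ _ x] g' by blast
  then show ?thesis unfolding induced_map_def g'_def[symmetric] .
qed

theorem mainTheorem2:
  fixes G :: "('g, 'a) monoid_scheme" and H :: "('h, 'b) monoid_scheme"
    and X :: "'x set" and D :: "'g \<Rightarrow> 'x set" and f :: "'g \<Rightarrow> 'x \<Rightarrow> 'x"
    and \<psi> :: "'g \<Rightarrow> 'h"
  assumes "group G" and "group H" and "partial_action G X D f" and "\<psi> \<in> hom G H"
  shows "(induced_well_defined G \<psi> D f \<and>
          partial_action H X (induced_dom G \<psi> D) (induced_map G \<psi> D f))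
     \<longleftrightarrow> (\<forall>g\<in>carrier G. \<psi> g = \<one>\<^bsub>H\<^esub> \<longrightarrow>
            D g = D (inv\<^bsub>G\<^esub> g) \<and> (\<forall>x \<in> D (inv\<^bsub>G\<^esub> g). f g x = x))"
proof -
  interpret G: group G by fact
  interpret H: group H by fact
  interpret P: group_hom G H \<psi> unfolding group_hom_def group_hom_axioms_def using assms by simp
  note B = pa_basic[OF assms(1) assms(3)]
  note b1 = B(1) and b2 = B(2) and b3 = B(3) and b4 = B(4) and b5 = B(5) and b6 = B(6) and b7 = B(7)
  show ?thesis
  proof
    assume "induced_well_defined G \<psi> D f \<and> partial_action H X (induced_dom G \<psi> D) (induced_map G \<psi> D f)"
    then have wd: "induced_well_defined G \<psi> D f" by blast
    show "\<forall>g\<in>carrier G. \<psi> g = \<one>\<^bsub>H\<^esub> \<longrightarrow> D g = D (inv\<^bsub>G\<^esub> g) \<and> (\<forall>x \<in> D (inv\<^bsub>G\<^esub> g). f g x = x)"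
    proof (intro ballI impI)
      fix g assume g: "g \<in> carrier G" and k: "\<psi> g = \<one>\<^bsub>H\<^esub>"
      have ig: "inv\<^bsub>G\<^esub> g \<in> carrier G" using g by simp
      have id: "\<forall>x \<in> D (inv\<^bsub>G\<^esub> g). f g x = x"
      proof
        fix x assume x: "x \<in> D (inv\<^bsub>G\<^esub> g)"
        have xX: "x \<in> X" using b1[OF ig] x by blast
        have "f g x = f \<one>\<^bsub>G\<^esub> x"
          apply (rule wdD[OF wd g])
          using x xX b3 k by auto
        then show "f g x = x" using b4 xX by simp
      qed
      have "f g ` (D (inv\<^bsub>G\<^esub> g) \<inter> D \<one>\<^bsub>G\<^esub>) = D g \<inter> D (g \<otimes>\<^bsub>G\<^esub> \<one>\<^bsub>G\<^esub>)" using b5[OF g] by simp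
      moreover have "D (inv\<^bsub>G\<^esub> g) \<inter> D \<one>\<^bsub>G\<^esub> = D (inv\<^bsub>G\<^esub> g)" using b1[OF ig] b3 by blast
      moreover have "D g \<inter> D (g \<otimes>\<^bsub>G\<^esub> \<one>\<^bsub>G\<^esub>) = D g" using g by simp
      moreover have "f g ` D (inv\<^bsub>G\<^esub> g) = D (inv\<^bsub>G\<^esub> g)" using id by simp
      ultimately show "D g = D (inv\<^bsub>G\<^esub> g) \<and> (\<forall>x \<in> D (inv\<^bsub>G\<^esub> g). f g x = x)" using id by simp
    qed
  next
    assume K: "\<forall>g\<in>carrier G. \<psi> g = \<one>\<^bsub>H\<^esub> \<longrightarrow> D g = D (inv\<^bsub>G\<^esub> g) \<and> (\<forall>x \<in> D (inv\<^bsub>G\<^esub> g). f g x = x)"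
    show "induced_well_defined G \<psi> D f \<and> partial_action H X (induced_dom G \<psi> D) (induced_map G \<psi> D f)"
    proof
      have K1: "\<And>g. g \<in> carrier G \<Longrightarrow> \<psi> g = \<one>\<^bsub>H\<^esub> \<Longrightarrow> D g = D (inv\<^bsub>G\<^esub> g)" using K by blast
      have K2: "\<And>g x. g \<in> carrier G \<Longrightarrow> \<psi> g = \<one>\<^bsub>H\<^esub> \<Longrightarrow> x \<in> D (inv\<^bsub>G\<^esub> g) \<Longrightarrow> f g x = x"
        using K by blast
      show wd: "induced_well_defined G \<psi> D f"
        unfolding induced_well_defined_def
      proof (intro ballI impI)
        fix g1 g2 x assume g1: "g1 \<in> carrier G" and g2: "g2 \<in> carrier G" and e: "\<psi> g1 = \<psi> g2"
          and x: "x \<in> D (inv\<^bsub>G\<^esub> g1) \<inter> D (inv\<^bsub>G\<^esub> g2)"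
        define m where "m = g1 \<otimes>\<^bsub>G\<^esub> inv\<^bsub>G\<^esub> g2"
        have m: "m \<in> carrier G" "inv\<^bsub>G\<^esub> m \<in> carrier G" using g1 g2 m_def by auto
        have pm: "\<psi> (inv\<^bsub>G\<^esub> m) = \<one>\<^bsub>H\<^esub>" using g1 g2 e m_def
          by (simp add: P.hom_mult P.hom_inv)
        have y: "f g1 x \<in> D m"
          using b5[OF g1, of "inv\<^bsub>G\<^esub> g2"] g2 x m_def by auto
        have "f (inv\<^bsub>G\<^esub> m) (f g1 x) = f g1 x"
          using K2[OF m(2) pm] y m by simp
        moreover have "f (inv\<^bsub>G\<^esub> m) (f g1 x) = f (inv\<^bsub>G\<^esub> m \<otimes>\<^bsub>G\<^esub> g1) x"
        proof (rule b6[OF m(2) g1])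
          show "x \<in> D (inv\<^bsub>G\<^esub> g1)" using x by blast
          have "inv\<^bsub>G\<^esub> g1 \<otimes>\<^bsub>G\<^esub> inv\<^bsub>G\<^esub> (inv\<^bsub>G\<^esub> m) = inv\<^bsub>G\<^esub> g2"
            using g1 g2 m_def by (simp add: G.m_assoc[symmetric])
          then show "x \<in> D (inv\<^bsub>G\<^esub> g1 \<otimes>\<^bsub>G\<^esub> inv\<^bsub>G\<^esub> (inv\<^bsub>G\<^esub> m))" using x by simp
        qed
        moreover have "inv\<^bsub>G\<^esub> m \<otimes>\<^bsub>G\<^esub> g1 = g2"
          using g1 g2 m_def by (simp add: G.inv_mult_group G.m_assoc)
        ultimately show "f g1 x = f g2 x" by simp
      qed
        have dominv: "\<And>h x. h \<in> carrier H \<Longrightarrow> x \<in> induced_dom G \<psi> D (inv\<^bsub>H\<^esub> h) \<longleftrightarrow>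
            (\<exists>g\<in>carrier G. \<psi> g = h \<and> x \<in> D (inv\<^bsub>G\<^esub> g))"
        proof -
          fix h x assume h: "h \<in> carrier H"
          show "x \<in> induced_dom G \<psi> D (inv\<^bsub>H\<^esub> h) \<longleftrightarrow> (\<exists>g\<in>carrier G. \<psi> g = h \<and> x \<in> D (inv\<^bsub>G\<^esub> g))"
            unfolding dom_iff
          proof
            assume "\<exists>g\<in>carrier G. \<psi> g = inv\<^bsub>H\<^esub> h \<and> x \<in> D g"
            then obtain g where g: "g \<in> carrier G" "\<psi> g = inv\<^bsub>H\<^esub> h" "x \<in> D g" by blast
            have "\<psi> (inv\<^bsub>G\<^esub> g) = h" using g h by (simp add: P.hom_inv)
            then show "\<exists>g\<in>carrier G. \<psi> g = h \<and> x \<in> D (inv\<^bsub>G\<^esub> g)" using g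
              by (intro bexI[of _ "inv\<^bsub>G\<^esub> g"]) auto
          next
            assume "\<exists>g\<in>carrier G. \<psi> g = h \<and> x \<in> D (inv\<^bsub>G\<^esub> g)"
            then obtain g where g: "g \<in> carrier G" "\<psi> g = h" "x \<in> D (inv\<^bsub>G\<^esub> g)" by blast
            have "\<psi> (inv\<^bsub>G\<^esub> g) = inv\<^bsub>H\<^esub> h" using g h by (simp add: P.hom_inv)
            then show "\<exists>g\<in>carrier G. \<psi> g = inv\<^bsub>H\<^esub> h \<and> x \<in> D g" using g
              by (intro bexI[of _ "inv\<^bsub>G\<^esub> g"]) auto
          qed
        qed
      show "partial_action H X (induced_dom G \<psi> D) (induced_map G \<psi> D f)"
        unfolding partial_action_def
      proof (intro conjI ballI)
        fix h assume h: "h \<in> carrier H"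
        show "induced_dom G \<psi> D h \<subseteq> X" using b1 unfolding dom_iff by (auto simp: induced_dom_def)
        show "bij_betw (induced_map G \<psi> D f h) (induced_dom G \<psi> D (inv\<^bsub>H\<^esub> h)) (induced_dom G \<psi> D h)"
          unfolding bij_betw_def
        proof
          show "inj_on (induced_map G \<psi> D f h) (induced_dom G \<psi> D (inv\<^bsub>H\<^esub> h))"
          proof (rule inj_onI)
            fix x1 x2 assume x1: "x1 \<in> induced_dom G \<psi> D (inv\<^bsub>H\<^esub> h)" and x2: "x2 \<in> induced_dom G \<psi> D (inv\<^bsub>H\<^esub> h)"
              and eq: "induced_map G \<psi> D f h x1 = induced_map G \<psi> D f h x2"
            obtain g1 where g1: "g1 \<in> carrier G" "\<psi> g1 = h" "x1 \<in> D (inv\<^bsub>G\<^esub> g1)" using x1 dominv[OF h] by blast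
            obtain g2 where g2: "g2 \<in> carrier G" "\<psi> g2 = h" "x2 \<in> D (inv\<^bsub>G\<^esub> g2)" using x2 dominv[OF h] by blast
            have e1: "induced_map G \<psi> D f h x1 = f g1 x1" using map_eq[OF wd g1(1) g1(3)] g1(2) by simp
            have e2: "induced_map G \<psi> D f h x2 = f g2 x2" using map_eq[OF wd g2(1) g2(3)] g2(2) by simp
            define y where "y = f g1 x1"
            have y2: "y = f g2 x2" using eq e1 e2 y_def by simp
            have yD1: "y \<in> D g1" using b2[OF g1(1) g1(3)] y_def by simp
            have yD2: "y \<in> D g2" using b2[OF g2(1) g2(3)] y2 by simp
            have i1: "inv\<^bsub>G\<^esub> g1 \<in> carrier G" "inv\<^bsub>G\<^esub> g2 \<in> carrier G" using g1 g2 by auto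
            have r1: "f (inv\<^bsub>G\<^esub> g1) y = x1" using b7[OF i1(1)] g1 y_def by simp
            have r2: "f (inv\<^bsub>G\<^esub> g2) y = x2" using b7[OF i1(2)] g2 y2 by simp
            have "f (inv\<^bsub>G\<^esub> g1) y = f (inv\<^bsub>G\<^esub> g2) y"
              apply (rule wdD[OF wd i1])
              using g1 g2 yD1 yD2 by (auto simp: P.hom_inv)
            then show "x1 = x2" using r1 r2 by simp
          qed
          show "induced_map G \<psi> D f h ` induced_dom G \<psi> D (inv\<^bsub>H\<^esub> h) = induced_dom G \<psi> D h"
          proof
            show "induced_map G \<psi> D f h ` induced_dom G \<psi> D (inv\<^bsub>H\<^esub> h) \<subseteq> induced_dom G \<psi> D h"
            proof
              fix y assume "y \<in> induced_map G \<psi> D f h ` induced_dom G \<psi> D (inv\<^bsub>H\<^esub> h)"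
              then obtain x where x: "x \<in> induced_dom G \<psi> D (inv\<^bsub>H\<^esub> h)" and y: "y = induced_map G \<psi> D f h x" by blast
              obtain g where g: "g \<in> carrier G" "\<psi> g = h" "x \<in> D (inv\<^bsub>G\<^esub> g)" using x dominv[OF h] by blast
              have "y = f g x" using map_eq[OF wd g(1) g(3)] g(2) y by simp
              then have "y \<in> D g" using b2[OF g(1) g(3)] by simp
              then show "y \<in> induced_dom G \<psi> D h" using g unfolding dom_iff by blast
            qed
            show "induced_dom G \<psi> D h \<subseteq> induced_map G \<psi> D f h ` induced_dom G \<psi> D (inv\<^bsub>H\<^esub> h)"
            proof
              fix y assume "y \<in> induced_dom G \<psi> D h"
              then obtain g where g: "g \<in> carrier G" "\<psi> g = h" "y \<in> D g" unfolding dom_iff by blast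
              have ig: "inv\<^bsub>G\<^esub> g \<in> carrier G" using g by simp
              define x where "x = f (inv\<^bsub>G\<^esub> g) y"
              have xD: "x \<in> D (inv\<^bsub>G\<^esub> g)" using b2[OF ig] g x_def by simp
              have "induced_map G \<psi> D f h x = f g x" using map_eq[OF wd g(1) xD] g(2) by simp
              also have "\<dots> = y" using b7[OF g(1) g(3)] x_def by simp
              finally have "y = induced_map G \<psi> D f h x" by simp
              moreover have "x \<in> induced_dom G \<psi> D (inv\<^bsub>H\<^esub> h)" using dominv[OF h] g xD by blast
              ultimately show "y \<in> induced_map G \<psi> D f h ` induced_dom G \<psi> D (inv\<^bsub>H\<^esub> h)" by blast
            qed
          qed
        qed
      next
        show "induced_dom G \<psi> D \<one>\<^bsub>H\<^esub> = X"
        proof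
          show "induced_dom G \<psi> D \<one>\<^bsub>H\<^esub> \<subseteq> X" using b1 unfolding dom_iff by (auto simp: induced_dom_def)
          show "X \<subseteq> induced_dom G \<psi> D \<one>\<^bsub>H\<^esub>" 
          proof
            fix y assume "y \<in> X"
            then show "y \<in> induced_dom G \<psi> D \<one>\<^bsub>H\<^esub>" unfolding dom_iff using b3
              by (intro bexI[of _ "\<one>\<^bsub>G\<^esub>"]) auto
          qed
        qed
      next
        fix x assume x: "x \<in> X"
        have "x \<in> D (inv\<^bsub>G\<^esub> \<one>\<^bsub>G\<^esub>)" using x b3 by simp
        from map_eq[OF wd G.one_closed this]
        show "induced_map G \<psi> D f \<one>\<^bsub>H\<^esub> x = x" using b4 x by simp
      next
        fix h k assume h: "h \<in> carrier H" and k: "k \<in> carrier H"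
        show "induced_map G \<psi> D f h ` (induced_dom G \<psi> D (inv\<^bsub>H\<^esub> h) \<inter> induced_dom G \<psi> D k) =
          induced_dom G \<psi> D h \<inter> induced_dom G \<psi> D (h \<otimes>\<^bsub>H\<^esub> k)"
        proof
          show "induced_map G \<psi> D f h ` (induced_dom G \<psi> D (inv\<^bsub>H\<^esub> h) \<inter> induced_dom G \<psi> D k) \<subseteq>
            induced_dom G \<psi> D h \<inter> induced_dom G \<psi> D (h \<otimes>\<^bsub>H\<^esub> k)"
          proof
            fix y assume "y \<in> induced_map G \<psi> D f h ` (induced_dom G \<psi> D (inv\<^bsub>H\<^esub> h) \<inter> induced_dom G \<psi> D k)"
            then obtain x where x1: "x \<in> induced_dom G \<psi> D (inv\<^bsub>H\<^esub> h)" and x2: "x \<in> induced_dom G \<psi> D k"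
              and y: "y = induced_map G \<psi> D f h x" by blast
            obtain a where a: "a \<in> carrier G" "\<psi> a = h" "x \<in> D (inv\<^bsub>G\<^esub> a)" using x1 dominv[OF h] by blast
            obtain b where b: "b \<in> carrier G" "\<psi> b = k" "x \<in> D b" using x2 unfolding dom_iff by blast
            have "y = f a x" using map_eq[OF wd a(1) a(3)] a(2) y by simp
            moreover have "f a x \<in> f a ` (D (inv\<^bsub>G\<^esub> a) \<inter> D b)" using a b by blast
            ultimately have yy: "y \<in> D a \<inter> D (a \<otimes>\<^bsub>G\<^esub> b)" unfolding b5[OF a(1) b(1)] by simp
            have pab: "\<psi> (a \<otimes>\<^bsub>G\<^esub> b) = h \<otimes>\<^bsub>H\<^esub> k" using a b by (simp add: P.hom_mult)
            have abc: "a \<otimes>\<^bsub>G\<^esub> b \<in> carrier G" using a b by simp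
            have "y \<in> induced_dom G \<psi> D h" unfolding dom_iff using a yy by (intro bexI[of _ a]) auto
            moreover have "y \<in> induced_dom G \<psi> D (h \<otimes>\<^bsub>H\<^esub> k)" unfolding dom_iff using pab abc yy
              by (intro bexI[of _ "a \<otimes>\<^bsub>G\<^esub> b"]) auto
            ultimately show "y \<in> induced_dom G \<psi> D h \<inter> induced_dom G \<psi> D (h \<otimes>\<^bsub>H\<^esub> k)" by blast
          qed
          show "induced_dom G \<psi> D h \<inter> induced_dom G \<psi> D (h \<otimes>\<^bsub>H\<^esub> k) \<subseteq>
            induced_map G \<psi> D f h ` (induced_dom G \<psi> D (inv\<^bsub>H\<^esub> h) \<inter> induced_dom G \<psi> D k)"
          proof
            fix y assume yin: "y \<in> induced_dom G \<psi> D h \<inter> induced_dom G \<psi> D (h \<otimes>\<^bsub>H\<^esub> k)"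
            have "y \<in> induced_dom G \<psi> D h" using yin by (rule IntD1)
            then obtain a where a: "a \<in> carrier G" "\<psi> a = h" "y \<in> D a" unfolding dom_iff by blast
            have "y \<in> induced_dom G \<psi> D (h \<otimes>\<^bsub>H\<^esub> k)" using yin by (rule IntD2)
            then obtain c where c: "c \<in> carrier G" "\<psi> c = h \<otimes>\<^bsub>H\<^esub> k" "y \<in> D c" unfolding dom_iff by blast
            define b where "b = inv\<^bsub>G\<^esub> a \<otimes>\<^bsub>G\<^esub> c"
            have bc: "b \<in> carrier G" using a c b_def by simp
            have ab: "a \<otimes>\<^bsub>G\<^esub> b = c" using a c b_def by (simp add: G.m_assoc[symmetric])
            have pb: "\<psi> b = k" using a c h k b_def by (simp add: P.hom_mult P.hom_inv H.m_assoc[symmetric])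
            have "y \<in> D a \<inter> D (a \<otimes>\<^bsub>G\<^esub> b)" using a c ab by simp
            then have "y \<in> f a ` (D (inv\<^bsub>G\<^esub> a) \<inter> D b)" unfolding b5[OF a(1) bc] .
            then obtain x where x: "x \<in> D (inv\<^bsub>G\<^esub> a)" "x \<in> D b" and y: "y = f a x"
              by blast
            have "induced_map G \<psi> D f h x = y" using map_eq[OF wd a(1) x(1)] a(2) y by simp
            moreover have "x \<in> induced_dom G \<psi> D (inv\<^bsub>H\<^esub> h)" using dominv[OF h] a x by blast
            moreover have "x \<in> induced_dom G \<psi> D k" unfolding dom_iff using bc pb x
              by (intro bexI[of _ b]) auto
            ultimately show "y \<in> induced_map G \<psi> D f h ` (induced_dom G \<psi> D (inv\<^bsub>H\<^esub> h) \<inter> induced_dom G \<psi> D k)"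
              by blast
          qed
        qed
      next
        fix h k x assume h: "h \<in> carrier H" and k: "k \<in> carrier H"
          and x: "x \<in> induced_dom G \<psi> D (inv\<^bsub>H\<^esub> k) \<inter> induced_dom G \<psi> D (inv\<^bsub>H\<^esub> k \<otimes>\<^bsub>H\<^esub> inv\<^bsub>H\<^esub> h)"
        obtain b where b: "b \<in> carrier G" "\<psi> b = k" "x \<in> D (inv\<^bsub>G\<^esub> b)" using IntD1[OF x] dominv[OF k] by blast
        obtain g where g: "g \<in> carrier G" "\<psi> g = inv\<^bsub>H\<^esub> k \<otimes>\<^bsub>H\<^esub> inv\<^bsub>H\<^esub> h" "x \<in> D g"
          using IntD2[OF x] unfolding dom_iff by blast
        define c where "c = inv\<^bsub>G\<^esub> g"
        have cc: "c \<in> carrier G" using g c_def by simp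
        have pc: "\<psi> c = h \<otimes>\<^bsub>H\<^esub> k" using g h k c_def by (simp add: P.hom_inv H.inv_mult_group)
        have xc: "x \<in> D (inv\<^bsub>G\<^esub> c)" using g c_def by simp
        define a where "a = c \<otimes>\<^bsub>G\<^esub> inv\<^bsub>G\<^esub> b"
        have ac: "a \<in> carrier G" using cc b a_def by simp
        have pa: "\<psi> a = h" using cc pc b h k a_def by (simp add: P.hom_mult P.hom_inv H.m_assoc)
        have iba: "inv\<^bsub>G\<^esub> b \<otimes>\<^bsub>G\<^esub> inv\<^bsub>G\<^esub> a = inv\<^bsub>G\<^esub> c"
          using cc b a_def by (simp add: G.inv_mult_group G.m_assoc[symmetric])
        have abc: "a \<otimes>\<^bsub>G\<^esub> b = c" using cc b a_def by (simp add: G.m_assoc)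
        have x2: "x \<in> D (inv\<^bsub>G\<^esub> b \<otimes>\<^bsub>G\<^esub> inv\<^bsub>G\<^esub> a)" using iba xc by simp
        have comp: "f a (f b x) = f c x" using b6[OF ac b(1) b(3) x2] abc by simp
        have "f b x \<in> D b \<inter> D (b \<otimes>\<^bsub>G\<^esub> (inv\<^bsub>G\<^esub> b \<otimes>\<^bsub>G\<^esub> inv\<^bsub>G\<^esub> a))"
          using b5[OF b(1), of "inv\<^bsub>G\<^esub> b \<otimes>\<^bsub>G\<^esub> inv\<^bsub>G\<^esub> a"] b ac x2 by auto
        moreover have "b \<otimes>\<^bsub>G\<^esub> (inv\<^bsub>G\<^esub> b \<otimes>\<^bsub>G\<^esub> inv\<^bsub>G\<^esub> a) = inv\<^bsub>G\<^esub> a"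
          using b ac by (simp add: G.m_assoc[symmetric])
        ultimately have fbx: "f b x \<in> D (inv\<^bsub>G\<^esub> a)" by simp
        have "induced_map G \<psi> D f k x = f b x" using map_eq[OF wd b(1) b(3)] b(2) by simp
        moreover have "induced_map G \<psi> D f h (f b x) = f a (f b x)" using map_eq[OF wd ac fbx] pa by simp
        moreover have "induced_map G \<psi> D f (h \<otimes>\<^bsub>H\<^esub> k) x = f c x" using map_eq[OF wd cc xc] pc by simp
        ultimately show "induced_map G \<psi> D f h (induced_map G \<psi> D f k x) = induced_map G \<psi> D f (h \<otimes>\<^bsub>H\<^esub> k) x"
          using comp by simp
      qed
    qed
  qed
qed

end
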